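(* Fix $C>0$. (i) There exists $\varepsilon_0>0$ such that for all $0<\varepsilon<\varepsilon_0$, all $s>0$, all $\omega\in\mathcal C^{\rm opt}_{s,\varepsilon}$ and all $t_0\in[0,L(\omega)]$: if $\omega_2(t_0)\ge C\varepsilon$ then $\omega_2(t)\ge\tfrac C2\varepsilon$ for all $t\in[t_0,L(\omega)]$. (ii) There exists $\varepsilon_0>0$ such that for all $(\varepsilon,s)\in\mathcal I_{\varepsilon_0}$, all $\omega\in\mathcal C^{\rm opt}_{s,\varepsilon}$ and all $t_0\in[0,L(\omega)]$: if $\omega_2(t_0)\ge C\varepsilon$ then $\omega_1(t)\ge(\tfrac C4\varepsilon)^q$ for all $t\in[t_0,L(\omega)]$.
   Context: Fix an odd integer $b\geq5$, $q=b/2$. Let $P(x_1,x_2)=x_1^2-x_2^b$, $\widetilde P(x_1,x_2)=P(x_1,x_2)$ if $x_2\ge0$ and $x_1^2$ if $x_2<0$. Let $\mathcal M=(\mathbb{R}^3,\mathrm{span}\{X_1,X_2\},g)$ with $X_1=\partial_{x_1}$, $X_2=\partial_{x_2}+P(x_1,x_2)^2\partial_{x_3}$ orthonormal; $L_{\rm SR},d_{\rm SR}$ sub-Riemannian length and distance; $L(\cdot)$ Euclidean length. $\gamma(t)=(0,t,\tfrac{t^{2b+1}}{2b+1})$ for $t<0$, $\gamma(t)=(t^q,t,0)$ for $t\ge0$, $\gamma_{s,\varepsilon}=\gamma|_{[-s,\varepsilon]}$, $\pi(x_1,x_2,x_3)=(x_1,x_2)$. $\mathcal C^{\rm opt}_{s,\varepsilon}$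 is the set of arc-length parametrized $\omega:[0,T]\to\mathbb{R}^2$, $T=L(\omega)$, with $\omega=\pi\circ\eta$ for a horizontal $\eta$ from $\gamma(-s)$ to $\gamma(\varepsilon)$ with $L_{\rm SR}(\eta)=d_{\rm SR}(\gamma(-s),\gamma(\varepsilon))$, $\omega$ not the arc-length reparametrization of $\pi\circ\gamma_{s,\varepsilon}$. $\beta_\omega=\max|P\circ\omega|$, $\widetilde\beta_\omega=\max|\widetilde P\circ\omega|$. Standing choices: $\varepsilon_\star>0$ is fixed so that for every $0<\varepsilon<\varepsilon_\star$, $\gamma|_{[0,\varepsilon]}$ is the unique (up to reparametrization) length-minimizer between $(0,0,0)$ and $(\varepsilon^q,\varepsilon,0)$; $M>3q-1$ is fixed; for each $0<\varepsilon<\varepsilon_\star$, $\bar s(\varepsilon,M)>0$ is fixed so that for all $0<s<\bar s(\varepsilon,M)$ and all $\omega\in\mathcal C^{\rm opt}_{s,\varepsilon}$, $\beta_\omega,\widetilde\beta_\omega<\varepsilon^M$. For $\varepsilon_0>0$, $\mathcal I_{\varepsilon_0}=\{(\varepsilon,s)\in(0,\infty)^2:\ \varepsilon<\min\{\varepsilon_\star,\varepsilon_0\},\ s<\min\{\bar s(\varepsilon,M),\varepsilon^2\}\}$. *)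

theory Defs
  imports "HOL-Analysis.Analysis"
begin

type_synonym pt3 = "real \<times> real \<times> real"
type_synonym pt2 = "real \<times> real"

definition qexp :: "nat \<Rightarrow> real" where
  "qexp b = real b / 2"

definition Pf :: "nat \<Rightarrow> real \<Rightarrow> real \<Rightarrow> real" where
  "Pf b x1 x2 = x1^2 - x2^b"

definition Ptil :: "nat \<Rightarrow> real \<Rightarrow> real \<Rightarrow> real" where
  "Ptil b x1 x2 = (if x2 \<ge> 0 then Pf b x1 x2 else x1^2)"

definition proj :: "pt3 \<Rightarrow> pt2" where
  "proj p = (fst p, fst (snd p))"

definition curve_len :: "real \<Rightarrow> real \<Rightarrow> (real \<Rightarrow> 'a::real_normed_vector) \<Rightarrow> real" where
  "curve_len a b c = integral {a..b} (\<lambda>t. norm (vector_derivative c (at t within {a..b})))"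

text \<open>Horizontal curves on [a,T] for the frame X1 = d/dx1, X2 = d/dx2 + P^2 d/dx3:
  Lipschitz curves whose velocity is a.e. u1 X1 + u2 X2.\<close>
definition horizontal :: "nat \<Rightarrow> (real \<Rightarrow> pt3) \<Rightarrow> real \<Rightarrow> real \<Rightarrow> bool" where
  "horizontal b \<eta> a T \<longleftrightarrow> a \<le> T \<and> (\<exists>K. K-lipschitz_on {a..T} \<eta>) \<and>
     (\<exists>u1 u2 :: real \<Rightarrow> real. AE t in lborel. t \<in> {a..T} \<longrightarrow>
        (\<eta> has_vector_derivative
           (u1 t, u2 t, (Pf b (fst (\<eta> t)) (fst (snd (\<eta> t))))^2 * u2 t)) (at t within {a..T}))"

text \<open>Sub-Riemannian length: integral of sqrt(u1^2+u2^2), i.e. the Euclidean length of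
  the projection (X1, X2 orthonormal and projecting onto e1, e2).\<close>
definition sr_length :: "(real \<Rightarrow> pt3) \<Rightarrow> real \<Rightarrow> real \<Rightarrow> real" where
  "sr_length \<eta> a T = curve_len a T (proj \<circ> \<eta>)"

definition d_SR :: "nat \<Rightarrow> pt3 \<Rightarrow> pt3 \<Rightarrow> real" where
  "d_SR b p p' = Inf {sr_length \<eta> 0 T | \<eta> T. horizontal b \<eta> 0 T \<and> \<eta> 0 = p \<and> \<eta> T = p'}"

definition gam :: "nat \<Rightarrow> real \<Rightarrow> pt3" where
  "gam b t = (if t < 0 then (0, t, t^(2*b+1) / (2*b+1)) else (t powr qexp b, t, 0))"

definition minimizer :: "nat \<Rightarrow> (real \<Rightarrow> pt3) \<Rightarrow> real \<Rightarrow> real \<Rightarrow> bool" where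
  "minimizer b \<eta> a T \<longleftrightarrow> horizontal b \<eta> a T \<and> sr_length \<eta> a T = d_SR b (\<eta> a) (\<eta> T)"

definition reparam_of :: "(real \<Rightarrow> 'a) \<Rightarrow> real \<Rightarrow> (real \<Rightarrow> 'a) \<Rightarrow> real \<Rightarrow> real \<Rightarrow> bool" where
  "reparam_of \<eta> T c a a' \<longleftrightarrow> (\<exists>\<phi>. continuous_on {0..T} \<phi> \<and> mono_on {0..T} \<phi> \<and>
      \<phi> ` {0..T} = {a..a'} \<and> (\<forall>t\<in>{0..T}. \<eta> t = c (\<phi> t)))"

definition unique_min_gamma :: "nat \<Rightarrow> real \<Rightarrow> bool" where
  "unique_min_gamma b \<epsilon> \<longleftrightarrow> minimizer b (gam b) 0 \<epsilon> \<and>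
     (\<forall>\<eta> T. horizontal b \<eta> 0 T \<and> \<eta> 0 = gam b 0 \<and> \<eta> T = gam b \<epsilon> \<and>
        sr_length \<eta> 0 T = d_SR b (gam b 0) (gam b \<epsilon>) \<longrightarrow> reparam_of \<eta> T (gam b) 0 \<epsilon>)"

definition arclength :: "(real \<Rightarrow> pt2) \<Rightarrow> real \<Rightarrow> bool" where
  "arclength \<omega> T \<longleftrightarrow> 0 \<le> T \<and> (\<forall>t1\<in>{0..T}. \<forall>t2\<in>{0..T}. t1 \<le> t2 \<longrightarrow> curve_len t1 t2 \<omega> = t2 - t1)"

definition arclength_reparam :: "(real \<Rightarrow> pt2) \<Rightarrow> real \<Rightarrow> (real \<Rightarrow> pt2) \<Rightarrow> real \<Rightarrow> real \<Rightarrow> bool" where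
  "arclength_reparam \<omega> T c a a' \<longleftrightarrow> T = curve_len a a' c \<and>
     (\<forall>t\<in>{a..a'}. \<omega> (curve_len a t c) = c t)"

definition Copt :: "nat \<Rightarrow> real \<Rightarrow> real \<Rightarrow> (real \<Rightarrow> pt2) \<Rightarrow> real \<Rightarrow> bool" where
  "Copt b s \<epsilon> \<omega> T \<longleftrightarrow> arclength \<omega> T \<and> T = curve_len 0 T \<omega> \<and>
     (\<exists>\<eta>. horizontal b \<eta> 0 T \<and> \<eta> 0 = gam b (-s) \<and> \<eta> T = gam b \<epsilon> \<and>
        sr_length \<eta> 0 T = d_SR b (gam b (-s)) (gam b \<epsilon>) \<and>
        (\<forall>t\<in>{0..T}. \<omega> t = proj (\<eta> t))) \<and>
     \<not> arclength_reparam \<omega> T (proj \<circ> gam b) (-s) \<epsilon>"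

definition beta :: "nat \<Rightarrow> (real \<Rightarrow> pt2) \<Rightarrow> real \<Rightarrow> real" where
  "beta b \<omega> T = Sup ((\<lambda>t. \<bar>Pf b (fst (\<omega> t)) (snd (\<omega> t))\<bar>) ` {0..T})"

definition beta_til :: "nat \<Rightarrow> (real \<Rightarrow> pt2) \<Rightarrow> real \<Rightarrow> real" where
  "beta_til b \<omega> T = Sup ((\<lambda>t. \<bar>Ptil b (fst (\<omega> t)) (snd (\<omega> t))\<bar>) ` {0..T})"

definition Iset :: "real \<Rightarrow> (real \<Rightarrow> real \<Rightarrow> real) \<Rightarrow> real \<Rightarrow> real \<Rightarrow> (real \<times> real) set" where
  "Iset eps_star sbar M \<epsilon>0 = {(\<epsilon>, s). 0 < \<epsilon> \<and> 0 < s \<and> \<epsilon> < min eps_star \<epsilon>0 \<and> s < min (sbar \<epsilon> M) (\<epsilon>^2)}"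

end

theory Submission
  imports Defs
begin


lemma det1: "det (matrix ((*\<^sub>R) c) :: real^1^1) = c"
  by simp

lemma image_len_bound:
  fixes g g' :: "real \<Rightarrow> real" and S :: "real set"
  assumes S: "S \<in> sets lebesgue"
    and der: "\<And>x. x \<in> S \<Longrightarrow> (g has_real_derivative g' x) (at x within S)"
    and h: "h integrable_on S" and bd: "\<And>x. x \<in> S \<Longrightarrow> \<bar>g' x\<bar> \<le> h x"
  shows "(\<lambda>_. 1::real) integrable_on g ` S \<and> integral (g ` S) (\<lambda>_. 1::real) \<le> integral S h"
proof -
  let ?lift = "vec :: real \<Rightarrow> real^1"
  let ?drop = "(\<lambda>x::real^1. x $ 1)"
  let ?G = "\<lambda>x::real^1. ?lift (g (?drop x))"
  let ?G' = "\<lambda>x::real^1. (*\<^sub>R) (g' (?drop x)) :: real^1 \<Rightarrow> real^1"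
  have S': "?lift ` S \<in> sets lebesgue"
    by (auto intro: differentiable_image_in_sets_lebesgue [OF S] differentiable_vec)
  have "((\<lambda>x. vec (g (x $ 1))) has_derivative (*\<^sub>R) (g' z)) (at (vec z) within ?lift ` S)"
    if "z \<in> S" for z
  proof -
    have "(g has_derivative (\<lambda>x. x * g' z)) (at z within S)"
      using der [OF that] unfolding has_field_derivative_def mult_commute_abs .
    then show ?thesis by (rule has_derivative_vector_1[where g'="\<lambda>_. g' z"])
  qed
  then have der': "\<And>x. x \<in> ?lift ` S \<Longrightarrow> (?G has_derivative ?G' x) (at x within ?lift ` S)"
    by auto
  have meas: "(\<lambda>x. det (matrix (?G' x))) \<in> borel_measurable (lebesgue_on (?lift ` S))"
    by (rule borel_measurable_det_Jacobian[OF S' der'])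
  have hS': "(\<lambda>x. h (?drop x)) integrable_on ?lift ` S"
  proof -
    have "((\<lambda>x. h (?drop x)) \<circ> vec) integrable_on ?drop ` ?lift ` S"
      using h by (simp add: image_image o_def)
    then show ?thesis
      using has_integral_vec1_D integrable_on_def by blast
  qed
  have int1: "(\<lambda>x. \<bar>det (matrix (?G' x))\<bar> * 1) integrable_on ?lift ` S"
    apply (rule measurable_bounded_by_integrable_imp_integrable_real[OF _ hS' _ S'])
    using meas apply (simp add: borel_measurable_abs)
    using bd by auto
  have main: "(\<lambda>_. 1::real) integrable_on (?G ` ?lift ` S) \<and> integral (?G ` ?lift ` S) (\<lambda>_. 1::real) \<le> integral (?lift ` S) (\<lambda>x. \<bar>det (matrix (?G' x))\<bar> * 1)"
    by (rule integral_on_image_ubound_nonneg[OF _ der' int1]) auto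
  have e1: "?G ` ?lift ` S = ?lift ` (g ` S)" by (auto simp: image_image)
  have e2: "?drop ` ?lift ` A = A" for A by (auto simp: image_image)
  have i1: "integral (?G ` ?lift ` S) (\<lambda>_. 1::real) = integral (g ` S) (\<lambda>_. 1::real)"
    unfolding e1 integral_vec1_eq e2 by (simp add: o_def)
  have "integral (?lift ` S) (\<lambda>x. \<bar>det (matrix (?G' x))\<bar> * 1) = integral S (\<lambda>x. \<bar>g' x\<bar>)"
    unfolding integral_vec1_eq e2 by (simp add: o_def)
  moreover have "(\<lambda>x. \<bar>g' x\<bar>) integrable_on S"
  proof -
    have "(\<lambda>x. \<bar>g' (?drop x)\<bar>) integrable_on ?lift ` S" using int1 by simp
    then obtain y where "((\<lambda>x. \<bar>g' (?drop x)\<bar>) has_integral y) (?lift ` S)" by blast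
    from has_integral_vec1_I[OF this] show ?thesis by (auto simp: e2 o_def)
  qed
  moreover have "integral S (\<lambda>x. \<bar>g' x\<bar>) \<le> integral S h"
    by (rule integral_le[OF calculation(2) h]) (use bd in auto)
  moreover have "(\<lambda>_. 1::real) integrable_on g ` S"
  proof -
    from main obtain y where "((\<lambda>_. 1::real) has_integral y) (?G ` ?lift ` S)" by blast
    from has_integral_vec1_I[OF this] show ?thesis unfolding e1 by (auto simp: e2 o_def)
  qed
  ultimately show ?thesis using main i1 by linarith
qed

lemma var_bound:
  fixes g g' h :: "real \<Rightarrow> real"
  assumes ab: "a \<le> b" and N: "negligible N"
   and der: "\<And>x. x \<in> {a..b} - N \<Longrightarrow> (g has_real_derivative g' x) (at x within {a..b})"
   and bd: "\<And>x. x \<in> {a..b} - N \<Longrightarrow> \<bar>g' x\<bar> \<le> h x"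
   and h: "h integrable_on {a..b}"
   and lip: "B-lipschitz_on {a..b} g"
  shows "\<bar>g b - g a\<bar> \<le> integral {a..b} h"
proof -
  define N' where "N' = {a..b} \<inter> N"
  define S where "S = {a..b} - N'"
  have N'neg: "negligible N'" unfolding N'_def using N negligible_subset by blast
  then have "N' \<in> sets lebesgue" using negligible_iff_null_sets by blast
  then have Sm: "S \<in> sets lebesgue" unfolding S_def by auto
  have SN: "S = {a..b} - N" unfolding S_def N'_def by auto
  have derS: "(g has_real_derivative g' x) (at x within S)" if "x \<in> S" for x
    using der[of x] that unfolding SN by (auto intro: DERIV_subset)
  have e1: "{x \<in> S - {a..b}. h x \<noteq> 0} = {}" "{x \<in> {a..b} - S. h x \<noteq> 0} \<subseteq> N'"
    unfolding S_def by auto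
  have n1: "negligible {x \<in> S - {a..b}. h x \<noteq> 0}" unfolding e1(1) by (rule negligible_empty)
  have n2: "negligible {x \<in> {a..b} - S. h x \<noteq> 0}" using e1(2) negligible_subset N'neg by blast
  have hS: "h integrable_on S"
    by (rule integrable_spike_set[OF h n2 n1])
  have hSeq: "integral S h = integral {a..b} h"
    by (rule integral_spike_set[OF n1 n2])
  have I1: "(\<lambda>_. 1::real) integrable_on g ` S \<and> integral (g ` S) (\<lambda>_. 1::real) \<le> integral S h"
    by (rule image_len_bound[OF Sm derS hS]) (use bd SN in auto)
  have gN: "negligible (g ` N')"
  proof (rule negligible_locally_Lipschitz_image)
    show "DIM(real) \<le> DIM(real)" by simp
    show "negligible N'" by fact
    fix x assume x: "x \<in> N'"
    show "\<exists>T B. open T \<and> x \<in> T \<and> (\<forall>y\<in>N' \<inter> T. norm (g y - g x) \<le> B * norm (y - x))"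
      apply (rule exI[of _ UNIV], rule exI[of _ B])
      using x lipschitz_onD[OF lip] by (auto simp: N'_def dist_real_def)
  qed
  define U where "U = g ` S \<union> g ` N'"
  have U: "g ` {a..b} = U" unfolding U_def S_def N'_def by auto
  have e2: "{x \<in> g ` S - U. (1::real) \<noteq> 0} = {}" "{x \<in> U - g ` S. (1::real) \<noteq> 0} \<subseteq> g ` N'"
    unfolding U_def by auto
  have m1: "negligible {x \<in> g ` S - U. (1::real) \<noteq> 0}" unfolding e2(1) by (rule negligible_empty)
  have m2: "negligible {x \<in> U - g ` S. (1::real) \<noteq> 0}" using e2(2) negligible_subset gN by blast
  have Uint: "(\<lambda>_. 1::real) integrable_on U"
    by (rule integrable_spike_set[OF I1[THEN conjunct1] m1 m2])
  have Ueq: "integral U (\<lambda>_. 1::real) = integral (g ` S) (\<lambda>_. 1::real)"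
    by (rule integral_spike_set[OF m2 m1])
  have cont: "continuous_on {a..b} g" using lip lipschitz_on_continuous_on by blast
  have conn: "connected (g ` {a..b})"
    by (rule connected_continuous_image[OF cont]) simp
  define m where "m = min (g a) (g b)"
  define M where "M = max (g a) (g b)"
  have sub: "{m..M} \<subseteq> U"
  proof
    fix z assume z: "z \<in> {m..M}"
    have ga: "g a \<in> g ` {a..b}" and gb: "g b \<in> g ` {a..b}" using ab by auto
    have "z \<in> g ` {a..b}"
    proof (cases "g a \<le> g b")
      case True
      then have "g a \<le> z" "z \<le> g b" using z by (auto simp: m_def M_def)
      then show ?thesis by (rule connectedD_interval[OF conn ga gb])
    next
      case False
      then have "g b \<le> z" "z \<le> g a" using z by (auto simp: m_def M_def)
      then show ?thesis by (rule connectedD_interval[OF conn gb ga])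
    qed
    then show "z \<in> U" unfolding U .
  qed
  have "integral {m..M} (\<lambda>_. 1::real) \<le> integral U (\<lambda>_. 1::real)"
    by (rule integral_subset_le[OF sub]) (use Uint in auto)
  moreover have "integral {m..M} (\<lambda>_. 1::real) = M - m"
    using content_real[of m M] by (simp add: m_def M_def)
  moreover have "M - m = \<bar>g b - g a\<bar>" by (simp add: m_def M_def)
  ultimately show ?thesis using I1 Ueq hSeq by linarith
qed



lemma C1_lip:
  fixes f f' :: "real \<Rightarrow> real"
  assumes der: "\<And>x. (f has_real_derivative f' x) (at x)" and cont: "continuous_on {a..b} f'"
  shows "\<exists>L. L-lipschitz_on {a..b} f"
proof -
  have "bounded (f' ` {a..b})"
    by (rule compact_imp_bounded, rule compact_continuous_image[OF cont]) simp
  then obtain B where B: "\<And>x. x \<in> {a..b} \<Longrightarrow> \<bar>f' x\<bar> \<le> B"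
    unfolding bounded_iff by (metis imageI real_norm_def)
  define L where "L = max B 0"
  have key: "\<bar>f y - f x\<bar> \<le> L * (y - x)" if "x \<in> {a..b}" "y \<in> {a..b}" "x < y" for x y
  proof -
    obtain z where z: "x < z" "z < y" "f y - f x = (y - x) * f' z"
      using MVT2[OF \<open>x < y\<close> der] by blast
    have "z \<in> {a..b}" using z that by auto
    then have "\<bar>f' z\<bar> \<le> L" using B L_def by force
    then show ?thesis using z(3) \<open>x < y\<close>
      by (simp add: abs_mult mult.commute mult_right_mono)
  qed
  have "L-lipschitz_on {a..b} f"
  proof (rule lipschitz_onI)
    fix x y assume xy: "x \<in> {a..b}" "y \<in> {a..b}"
    consider "x < y" | "x = y" | "y < x" by linarith
    then show "dist (f x) (f y) \<le> L * dist x y"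
    proof cases
      case 1 then show ?thesis using key[OF xy 1] by (simp add: dist_real_def abs_minus_commute)
    next
      case 2 then show ?thesis by (simp add: L_def)
    next
      case 3 then show ?thesis using key[OF xy(2,1) 3] by (simp add: dist_real_def abs_minus_commute)
    qed
  qed (simp add: L_def)
  then show ?thesis by blast
qed

lemma concat_lip:
  fixes p q p' q' :: "real \<Rightarrow> real"
  assumes "\<And>x. (p has_real_derivative p' x) (at x)" "continuous_on {a..c} p'"
    "\<And>x. (q has_real_derivative q' x) (at x)" "continuous_on {c..b} q'" "p c = q c"
  shows "\<exists>L. L-lipschitz_on {a..b} (\<lambda>x. if x \<le> c then p x else q x)"
proof -
  obtain L1 where L1: "L1-lipschitz_on {a..c} p" using C1_lip[OF assms(1,2)] by blast
  obtain L2 where L2: "L2-lipschitz_on {c..b} q" using C1_lip[OF assms(3,4)] by blast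
  show ?thesis using lipschitz_on_concat_max[OF L1 L2 assms(5)] by blast
qed

lemma dpow3:
  fixes s t :: real
  shows "((\<lambda>t. (t-s)^(2*b+1)/(2*b+1)) has_real_derivative (t-s)^(2*b)) (at t)"
proof -
  have d1: "((\<lambda>t. t - s) has_real_derivative 1) (at t)" by (auto intro!: derivative_eq_intros)
  have "((\<lambda>t. (t-s)^(2*b+1)/(2*b+1)) has_real_derivative (of_nat (2*b+1) * (1 * (t-s)^(2*b+1 - Suc 0))) / (2*b+1)) (at t)"
    by (rule DERIV_cdivide[OF DERIV_power[OF d1]])
  moreover have "(of_nat (2*b+1) * (1 * (t-s)^(2*b+1 - Suc 0))) / (2*b+1) = (t-s)^(2*b)"
    by (simp add: field_simps)
  ultimately show ?thesis by simp
qed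

lemma comparison:
  fixes b :: nat and s \<epsilon> :: real
  assumes b: "b \<ge> 1" and s: "s > 0" and e: "\<epsilon> > 0"
  shows "\<exists>\<eta> T. horizontal b \<eta> 0 T \<and> \<eta> 0 = gam b (-s) \<and> \<eta> T = gam b \<epsilon> \<and>
            sr_length \<eta> 0 T \<le> s + \<epsilon> + \<epsilon> powr qexp b"
proof -
  define r where "r = sqrt \<epsilon>"
  have r: "r > 0" "r^2 = \<epsilon>" using e by (auto simp: r_def)
  define T where "T = s + r"
  have T: "0 < T" "s < T" using s r by (auto simp: T_def)
  define c1 where "c1 = (\<lambda>t::real. if t \<le> s then 0 else (t-s)^b)"
  define c2 where "c2 = (\<lambda>t::real. if t \<le> s then t - s else (t-s)^2)"
  define c3 where "c3 = (\<lambda>t::real. if t \<le> s then (t-s)^(2*b+1)/(2*b+1) else 0)"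
  define \<eta> where "\<eta> = (\<lambda>t. (c1 t, c2 t, c3 t))"
  define u1 where "u1 = (\<lambda>t::real. if t \<le> s then 0 else b*(t-s)^(b-1))"
  define u2 where "u2 = (\<lambda>t::real. if t \<le> s then 1 else 2*(t-s))"
  have "\<exists>L. L-lipschitz_on {0..T} c1"
    unfolding c1_def
    by (rule concat_lip[where p'="\<lambda>_. 0" and q'="\<lambda>t. b*(t-s)^(b-1)"])
       (use b in \<open>auto intro!: derivative_eq_intros continuous_intros simp: Suc_le_eq\<close>)
  then obtain L1 where L1: "L1-lipschitz_on {0..T} c1" by blast
  have "\<exists>L. L-lipschitz_on {0..T} c2"
    unfolding c2_def
    by (rule concat_lip[where p'="\<lambda>_. 1" and q'="\<lambda>t. 2*(t-s)"])
       (auto intro!: derivative_eq_intros continuous_intros)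
  then obtain L2 where L2: "L2-lipschitz_on {0..T} c2" by blast
  have "\<exists>L. L-lipschitz_on {0..T} c3"
    unfolding c3_def
    apply (rule concat_lip[where p'="\<lambda>t. (t-s)^(2*b)" and q'="\<lambda>_. 0"])
    apply (rule dpow3)
    apply (intro continuous_intros)
    apply (rule DERIV_const)
    apply (intro continuous_intros)
    apply simp
    done
  then obtain L3 where L3: "L3-lipschitz_on {0..T} c3" by blast
  have lip: "\<exists>K. K-lipschitz_on {0..T} \<eta>"
    unfolding \<eta>_def using lipschitz_on_Pair[OF L1 lipschitz_on_Pair[OF L2 L3]] by blast
  have d_lt: "(\<eta> has_vector_derivative (0, 1, (t-s)^(2*b))) (at t)" if "t < s" for t
  proof -
    have "((\<lambda>t. (0::real, t - s, (t-s)^(2*b+1)/(2*b+1))) has_vector_derivative (0, 1, (t-s)^(2*b))) (at t)"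
      apply (rule has_vector_derivative_Pair)
       apply (rule has_vector_derivative_const)
      apply (rule has_vector_derivative_Pair)
       apply (subst has_real_derivative_iff_has_vector_derivative[symmetric])
       apply (auto intro!: derivative_eq_intros)[1]
      using dpow3[of s b t] unfolding has_real_derivative_iff_has_vector_derivative .
    then show ?thesis
      by (rule has_vector_derivative_transform_within_open[where S="{..<s}"])
         (use that in \<open>auto simp: \<eta>_def c1_def c2_def c3_def\<close>)
  qed
  have d_gt: "(\<eta> has_vector_derivative (b*(t-s)^(b-1), 2*(t-s), 0)) (at t)" if "t > s" for t
  proof -
    have "((\<lambda>t. ((t-s)^b, (t-s)^2, 0::real)) has_vector_derivative (b*(t-s)^(b-1), 2*(t-s), 0)) (at t)"
      by (auto intro!: derivative_eq_intros simp: has_real_derivative_iff_has_vector_derivative[symmetric])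
    then show ?thesis
      by (rule has_vector_derivative_transform_within_open[where S="{s<..}"])
         (use that in \<open>auto simp: \<eta>_def c1_def c2_def c3_def\<close>)
  qed
  have Peq_lt: "(Pf b (fst (\<eta> t)) (fst (snd (\<eta> t))))^2 * u2 t = (t-s)^(2*b)" if "t < s" for t
    using that by (simp add: \<eta>_def c1_def c2_def u2_def Pf_def power_mult[symmetric] mult.commute)
  have Peq_gt: "(Pf b (fst (\<eta> t)) (fst (snd (\<eta> t))))^2 * u2 t = 0" if "t > s" for t
    using that by (simp add: \<eta>_def c1_def c2_def u2_def Pf_def power_mult[symmetric] mult.commute)
  have AEd: "AE t in lborel. t \<in> {0..T} \<longrightarrow> (\<eta> has_vector_derivative
           (u1 t, u2 t, (Pf b (fst (\<eta> t)) (fst (snd (\<eta> t))))^2 * u2 t)) (at t within {0..T})"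
  proof (rule AE_mp[OF AE_lborel_singleton[of s]], rule AE_I2, intro impI)
    fix t :: real assume "t \<noteq> s" "t \<in> {0..T}"
    then consider "t < s" | "t > s" by linarith
    then show "(\<eta> has_vector_derivative
         (u1 t, u2 t, (Pf b (fst (\<eta> t)) (fst (snd (\<eta> t))))^2 * u2 t)) (at t within {0..T})"
    proof cases
      case 1 then show ?thesis using d_lt[OF 1] Peq_lt[OF 1]
        by (auto simp: u1_def u2_def intro: has_vector_derivative_at_within)
    next
      case 2 then show ?thesis using d_gt[OF 2] Peq_gt[OF 2]
        by (auto simp: u1_def u2_def intro: has_vector_derivative_at_within)
    qed
  qed
  have hor: "horizontal b \<eta> 0 T"
    unfolding horizontal_def
    apply (intro conjI)
    using T apply simp
    using lip apply simp
    apply (rule exI[of _ u1], rule exI[of _ u2])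
    by (rule AEd)
  have e0: "\<eta> 0 = gam b (-s)"
    using s by (simp add: \<eta>_def c1_def c2_def c3_def gam_def)
  have rb: "r^b = \<epsilon> powr qexp b"
    using e by (simp add: r_def powr_half_sqrt[symmetric] powr_power qexp_def)
  have eT: "\<eta> T = gam b \<epsilon>"
    using e r rb by (simp add: \<eta>_def c1_def c2_def c3_def gam_def T_def)
  define f where "f = (\<lambda>t. norm (vector_derivative (proj \<circ> \<eta>) (at t within {0..T})))"
  have pd_lt: "((proj \<circ> \<eta>) has_vector_derivative (0, 1)) (at t within {0..T})" if "t < s" for t
  proof -
    have "((\<lambda>t. (0::real, t - s)) has_vector_derivative (0, 1)) (at t)"
      apply (rule has_vector_derivative_Pair)
       apply (rule has_vector_derivative_const)
      apply (subst has_real_derivative_iff_has_vector_derivative[symmetric])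
      by (auto intro!: derivative_eq_intros)
    then have "((proj \<circ> \<eta>) has_vector_derivative (0, 1)) (at t)"
      by (rule has_vector_derivative_transform_within_open[where S="{..<s}"])
         (use that in \<open>auto simp: \<eta>_def c1_def c2_def proj_def\<close>)
    then show ?thesis by (rule has_vector_derivative_at_within)
  qed
  have pd_gt: "((proj \<circ> \<eta>) has_vector_derivative (b*(t-s)^(b-1), 2*(t-s))) (at t within {0..T})" if "t > s" for t
  proof -
    have "((\<lambda>t. ((t-s)^b, (t-s)^2)) has_vector_derivative (b*(t-s)^(b-1), 2*(t-s))) (at t)"
      by (auto intro!: derivative_eq_intros simp: has_real_derivative_iff_has_vector_derivative[symmetric])
    then have "((proj \<circ> \<eta>) has_vector_derivative (b*(t-s)^(b-1), 2*(t-s))) (at t)"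
      by (rule has_vector_derivative_transform_within_open[where S="{s<..}"])
         (use that in \<open>auto simp: \<eta>_def c1_def c2_def proj_def\<close>)
    then show ?thesis by (rule has_vector_derivative_at_within)
  qed
  have f_lt: "f t = 1" if "t \<in> {0..s} - {s}" for t
  proof -
    have "vector_derivative (proj \<circ> \<eta>) (at t within cbox 0 T) = (0, 1)"
      apply (rule vector_derivative_within_cbox) using that T pd_lt[of t] by auto
    then show ?thesis by (simp add: f_def)
  qed
  define k2 where "k2 = (\<lambda>t. norm (b*(t-s)^(b-1), 2*(t-s)))"
  have f_gt: "f t = k2 t" if "t \<in> {s..T} - {s}" for t
  proof -
    have "vector_derivative (proj \<circ> \<eta>) (at t within cbox 0 T) = (b*(t-s)^(b-1), 2*(t-s))"
      apply (rule vector_derivative_within_cbox) using that T s pd_gt[of t] by auto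
    then show ?thesis by (simp add: f_def k2_def)
  qed
  have I1: "(f has_integral s) {0..s}"
  proof (rule has_integral_spike_finite[of "{s}" _ _ "\<lambda>_. 1"])
    show "((\<lambda>_. 1::real) has_integral s) {0..s}"
      using has_integral_const_real[of "1::real" 0 s] s by simp
  qed (use f_lt in auto)
  have k2c: "continuous_on {s..T} k2" unfolding k2_def by (intro continuous_intros)
  have I2: "(f has_integral integral {s..T} k2) {s..T}"
    by (rule has_integral_spike_finite[of "{s}" _ _ k2])
       (use f_gt integrable_continuous_interval[OF k2c] in auto)
  have FTC: "((\<lambda>t. b*(t-s)^(b-1) + 2*(t-s)) has_integral ((T-s)^b + (T-s)^2 - ((s-s)^b + (s-s)^2))) {s..T}"
    apply (rule fundamental_theorem_of_calculus)
    using T apply simp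
    by (auto intro!: derivative_eq_intros simp: has_real_derivative_iff_has_vector_derivative[symmetric])
  have "integral {s..T} k2 \<le> integral {s..T} (\<lambda>t. b*(t-s)^(b-1) + 2*(t-s))"
  proof (rule integral_le)
    show "k2 integrable_on {s..T}" by (rule integrable_continuous_interval[OF k2c])
    show "(\<lambda>t. b*(t-s)^(b-1) + 2*(t-s)) integrable_on {s..T}" using FTC by blast
    fix t assume t: "t \<in> {s..T}"
    have "k2 t \<le> \<bar>b*(t-s)^(b-1)\<bar> + \<bar>2*(t-s)\<bar>"
      unfolding k2_def norm_Pair real_norm_def power2_abs by (rule sqrt_sum_squares_le_sum_abs)
    then show "k2 t \<le> b*(t-s)^(b-1) + 2*(t-s)" using t by simp
  qed
  also have "\<dots> = r^b + r^2"
    using integral_unique[OF FTC] b by (simp add: T_def Suc_le_eq)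
  finally have k2le: "integral {s..T} k2 \<le> \<epsilon> powr qexp b + \<epsilon>" using rb r by simp
  have "(f has_integral (s + integral {s..T} k2)) {0..T}"
    by (rule has_integral_combine[OF _ _ I1 I2]) (use s T in auto)
  then have "sr_length \<eta> 0 T = s + integral {s..T} k2"
    unfolding sr_length_def curve_len_def f_def[symmetric] by (rule integral_unique)
  then have "sr_length \<eta> 0 T \<le> s + \<epsilon> + \<epsilon> powr qexp b" using k2le by simp
  then show ?thesis using hor e0 eT by blast
qed

lemma curve_len_nonneg: "curve_len a b c \<ge> 0"
  unfolding curve_len_def
  by (cases "(\<lambda>t. norm (vector_derivative c (at t within {a..b}))) integrable_on {a..b}")
     (auto intro: integral_nonneg simp: not_integrable_integral)

lemma vd_cong:
  assumes "t \<in> S" "\<And>x. x \<in> S \<Longrightarrow> f x = g x"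
  shows "vector_derivative f (at t within S) = vector_derivative g (at t within S)"
proof -
  have "(f has_vector_derivative D) (at t within S) \<longleftrightarrow> (g has_vector_derivative D) (at t within S)" for D
    using has_vector_derivative_transform[OF assms(1), of g f D] has_vector_derivative_transform[OF assms(1), of f g D] assms(2)
    by auto
  then show ?thesis unfolding vector_derivative_def by simp
qed

lemma curve_len_cong:
  assumes "\<And>x. x \<in> {a..b} \<Longrightarrow> f x = g x"
  shows "curve_len a b f = curve_len a b g"
  unfolding curve_len_def
  apply (rule integral_cong)
  subgoal for x using vd_cong[of x "{a..b}" f g] assms by simp
  done

lemma proj_vd:
  assumes "(\<eta> has_vector_derivative v) (at x within S)"
  shows "((proj \<circ> \<eta>) has_vector_derivative proj v) (at x within S)"
proof -
  have hd: "(\<eta> has_derivative (\<lambda>x. x *\<^sub>R v)) (at x within S)" using assms unfolding has_vector_derivative_def .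
  have "((\<lambda>t. (fst (\<eta> t), fst (snd (\<eta> t)))) has_derivative (\<lambda>x. (fst (x *\<^sub>R v), fst (snd (x *\<^sub>R v))))) (at x within S)"
    using has_derivative_Pair[OF has_derivative_fst[OF hd] has_derivative_fst[OF has_derivative_snd[OF hd]]] .
  then show ?thesis
    unfolding has_vector_derivative_def proj_def o_def by simp
qed

lemma snd_vd:
  assumes "(f has_vector_derivative (w::real\<times>real)) F"
  shows "((\<lambda>t. snd (f t)) has_real_derivative snd w) F"
proof -
  have "((\<lambda>t. snd (f t)) has_derivative (\<lambda>x. snd (x *\<^sub>R w))) F"
    using assms unfolding has_vector_derivative_def by (intro has_derivative_snd)
  then show ?thesis unfolding has_field_derivative_def by (simp add: mult_commute_abs)
qed

lemma Copt_facts: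
  fixes b :: nat
  assumes b: "b \<ge> 1" and s: "s > 0" and e: "\<epsilon> > 0" and C: "Copt b s \<epsilon> \<omega> T"
  shows "0 \<le> T" "\<omega> 0 = (0, -s)" "\<omega> T = (\<epsilon> powr qexp b, \<epsilon>)" "T \<le> s + \<epsilon> + \<epsilon> powr qexp b"
    "continuous_on {0..T} \<omega>"
    "\<And>t1 t2. 0 \<le> t1 \<Longrightarrow> t1 \<le> t2 \<Longrightarrow> t2 \<le> T \<Longrightarrow> \<bar>snd (\<omega> t2) - snd (\<omega> t1)\<bar> \<le> t2 - t1"
proof -
  have arc: "arclength \<omega> T" and TT: "T = curve_len 0 T \<omega>"
    using C unfolding Copt_def by auto
  obtain \<eta> where hor: "horizontal b \<eta> 0 T" and e0: "\<eta> 0 = gam b (-s)" and eT: "\<eta> T = gam b \<epsilon>"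
    and len: "sr_length \<eta> 0 T = d_SR b (gam b (-s)) (gam b \<epsilon>)"
    and om: "\<forall>t\<in>{0..T}. \<omega> t = proj (\<eta> t)"
    using C unfolding Copt_def by blast
  show T0: "0 \<le> T" using arc unfolding arclength_def by simp
  show "\<omega> 0 = (0, -s)" using om T0 e0 s by (simp add: gam_def proj_def)
  show "\<omega> T = (\<epsilon> powr qexp b, \<epsilon>)" using om T0 eT e by (simp add: gam_def proj_def)
  obtain K where K: "K-lipschitz_on {0..T} \<eta>" using hor unfolding horizontal_def by blast
  obtain u1 u2 where AEd: "AE t in lborel. t \<in> {0..T} \<longrightarrow>
        (\<eta> has_vector_derivative
           (u1 t, u2 t, (Pf b (fst (\<eta> t)) (fst (snd (\<eta> t))))^2 * u2 t)) (at t within {0..T})"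
    using hor unfolding horizontal_def by blast
  have "continuous_on {0..T} (proj \<circ> \<eta>)"
    unfolding proj_def o_def
    by (intro continuous_intros lipschitz_on_continuous_on[OF K])
  then show cont: "continuous_on {0..T} \<omega>"
    by (rule continuous_on_eq) (use om in auto)
  have "T = sr_length \<eta> 0 T"
    unfolding sr_length_def TT[symmetric] using TT curve_len_cong[of 0 T \<omega> "proj \<circ> \<eta>"] om by simp
  also have "\<dots> \<le> s + \<epsilon> + \<epsilon> powr qexp b"
  proof -
    obtain \<eta>' T' where h': "horizontal b \<eta>' 0 T'" "\<eta>' 0 = gam b (-s)" "\<eta>' T' = gam b \<epsilon>"
      and l': "sr_length \<eta>' 0 T' \<le> s + \<epsilon> + \<epsilon> powr qexp b"
      using comparison[OF b s e] by blast
    have "d_SR b (gam b (-s)) (gam b \<epsilon>) \<le> sr_length \<eta>' 0 T'"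
      unfolding d_SR_def
    proof (rule cInf_lower)
      show "sr_length \<eta>' 0 T' \<in> {sr_length \<eta> 0 T |\<eta> T. horizontal b \<eta> 0 T \<and> \<eta> 0 = gam b (-s) \<and> \<eta> T = gam b \<epsilon>}"
        using h' by blast
      show "bdd_below {sr_length \<eta> 0 T |\<eta> T. horizontal b \<eta> 0 T \<and> \<eta> 0 = gam b (-s) \<and> \<eta> T = gam b \<epsilon>}"
        by (rule bdd_belowI[of _ 0]) (auto simp: sr_length_def curve_len_nonneg)
    qed
    then show ?thesis using len l' by simp
  qed
  finally show "T \<le> s + \<epsilon> + \<epsilon> powr qexp b" .
  obtain N where N: "{x \<in> space lborel. \<not> (x \<in> {0..T} \<longrightarrow>
        (\<eta> has_vector_derivative
           (u1 x, u2 x, (Pf b (fst (\<eta> x)) (fst (snd (\<eta> x))))^2 * u2 x)) (at x within {0..T}))} \<subseteq> N"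
     "emeasure lborel N = 0" "N \<in> sets lborel"
    using AE_E[OF AEd] by blast
  have Nneg: "negligible N"
    unfolding negligible_iff_null_sets using N by (auto intro: null_sets_completionI)
  fix t1 t2 :: real assume t1: "0 \<le> t1" and t12: "t1 \<le> t2" and t2: "t2 \<le> T"
  show "\<bar>snd (\<omega> t2) - snd (\<omega> t1)\<bar> \<le> t2 - t1"
  proof (cases "t1 = t2")
    case True then show ?thesis by simp
  next
    case False
    then have lt: "t1 < t2" using t12 by simp
    have sub: "{t1..t2} \<subseteq> {0..T}" using t1 t2 by auto
    define h where "h = (\<lambda>t. norm (vector_derivative \<omega> (at t within {t1..t2})))"
    have cl: "curve_len t1 t2 \<omega> = t2 - t1"
      using arc t1 t12 t2 unfolding arclength_def by auto
    then have hint: "h integrable_on {t1..t2}"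
      using lt not_integrable_integral unfolding curve_len_def h_def by fastforce
    have der: "((\<lambda>t. snd (\<omega> t)) has_real_derivative u2 x) (at x within {t1..t2})"
      and bd: "\<bar>u2 x\<bar> \<le> h x" if x: "x \<in> {t1..t2} - N" for x
    proof -
      have x0: "x \<in> {0..T}" using x sub by auto
      then have "(\<eta> has_vector_derivative
           (u1 x, u2 x, (Pf b (fst (\<eta> x)) (fst (snd (\<eta> x))))^2 * u2 x)) (at x within {0..T})"
        using N(1) x by auto
      then have "((proj \<circ> \<eta>) has_vector_derivative (u1 x, u2 x)) (at x within {0..T})"
        using proj_vd by (fastforce simp: proj_def)
      then have "((proj \<circ> \<eta>) has_vector_derivative (u1 x, u2 x)) (at x within {t1..t2})"
        by (rule has_vector_derivative_within_subset[OF _ sub])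
      then have dw: "(\<omega> has_vector_derivative (u1 x, u2 x)) (at x within {t1..t2})"
        by (rule has_vector_derivative_transform[rotated 2]) (use x om sub in auto)
      show "((\<lambda>t. snd (\<omega> t)) has_real_derivative u2 x) (at x within {t1..t2})"
        using snd_vd[OF dw] by simp
      have "vector_derivative \<omega> (at x within cbox t1 t2) = (u1 x, u2 x)"
        by (rule vector_derivative_within_cbox) (use lt x dw in auto)
      then have "h x = norm (u1 x, u2 x)" by (simp add: h_def)
      then show "\<bar>u2 x\<bar> \<le> h x" using norm_snd_le[where x="u1 x" and y="u2 x"] by simp
    qed
    have lip: "K-lipschitz_on {t1..t2} (\<lambda>t. snd (\<omega> t))"
    proof (rule lipschitz_onI)
      fix x y assume xy: "x \<in> {t1..t2}" "y \<in> {t1..t2}"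
      then have "x \<in> {0..T}" "y \<in> {0..T}" using sub by auto
      then have "dist (\<eta> x) (\<eta> y) \<le> K * dist x y" using lipschitz_onD[OF K] by blast
      moreover have "dist (snd (\<omega> x)) (snd (\<omega> y)) \<le> dist (\<eta> x) (\<eta> y)"
      proof -
        have "snd (\<omega> x) = fst (snd (\<eta> x))" "snd (\<omega> y) = fst (snd (\<eta> y))"
          using om \<open>x \<in> {0..T}\<close> \<open>y \<in> {0..T}\<close> by (auto simp: proj_def)
        then have "dist (snd (\<omega> x)) (snd (\<omega> y)) \<le> dist (snd (\<eta> x)) (snd (\<eta> y))"
          using dist_fst_le[of "snd (\<eta> x)" "snd (\<eta> y)"] by simp
        also have "\<dots> \<le> dist (\<eta> x) (\<eta> y)" by (rule dist_snd_le)
        finally show ?thesis .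
      qed
      ultimately show "dist (snd (\<omega> x)) (snd (\<omega> y)) \<le> K * dist x y" by linarith
    next
      show "0 \<le> K" using lipschitz_on_nonneg[OF K] .
    qed
    have "\<bar>snd (\<omega> t2) - snd (\<omega> t1)\<bar> \<le> integral {t1..t2} h"
      by (rule var_bound[OF t12 Nneg der bd hint lip])
    then show ?thesis using cl unfolding curve_len_def h_def by simp
  qed
qed

lemma partI:
  fixes b :: nat and C :: real
  assumes b: "b \<ge> 5" and C: "C > 0"
    and e: "0 < \<epsilon>" "\<epsilon> < min 1 C" and s: "0 < s" and Co: "Copt b s \<epsilon> \<omega> T"
    and t0: "t0 \<in> {0..T}" "snd (\<omega> t0) \<ge> C * \<epsilon>" and t: "t \<in> {t0..T}"
  shows "snd (\<omega> t) \<ge> C / 2 * \<epsilon>"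
proof (rule ccontr)
  assume neg: "\<not> snd (\<omega> t) \<ge> C / 2 * \<epsilon>"
  have b1: "b \<ge> 1" using b by simp
  note F = Copt_facts[OF b1 s e(1) Co]
  have a1: "snd (\<omega> t0) - snd (\<omega> 0) \<le> t0 - 0" using F(6)[of 0 t0] t0 by auto
  have a2: "snd (\<omega> t0) - snd (\<omega> t) \<le> t - t0" using F(6)[of t0 t] t0 t by auto
  have a3: "snd (\<omega> T) - snd (\<omega> t) \<le> T - t" using F(6)[of t T] t0 t by auto
  have "T > s + \<epsilon> + C * \<epsilon>" using a1 a2 a3 F(2,3) neg t0 by simp
  moreover have "\<epsilon> powr qexp b \<le> \<epsilon> powr 2"
    by (rule powr_mono') (use b e in \<open>auto simp: qexp_def\<close>)
  moreover have "\<epsilon> powr 2 = \<epsilon> * \<epsilon>" using e by (simp add: power2_eq_square)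
  moreover have "\<epsilon> * \<epsilon> < C * \<epsilon>" using e by simp
  ultimately show False using F(4) by linarith
qed

lemma partII_num:
  fixes b :: nat and C M \<epsilon> x y :: real
  assumes b: "b \<ge> 5" and C: "C > 0" and M: "M > b"
    and e: "0 < \<epsilon>" "\<epsilon> < ((C/2)^b/2) powr (1/(M - b))"
    and y: "y \<ge> C / 2 * \<epsilon>" and P: "\<bar>x^2 - y^b\<bar> < \<epsilon> powr M"
  shows "x^2 \<ge> (C/4*\<epsilon>)^b"
proof -
  have Mb: "M - b > 0" using M by simp
  have "\<epsilon> powr (M - b) < (((C/2)^b/2) powr (1/(M - b))) powr (M - b)"
    by (rule powr_less_mono2) (use Mb e in auto)
  also have "\<dots> = (C/2)^b/2"
    using Mb C by (simp add: powr_powr)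
  finally have l1: "\<epsilon> powr (M - b) < (C/2)^b/2" .
  have "\<epsilon> powr M = \<epsilon> powr (real b) * \<epsilon> powr (M - b)"
    by (simp add: powr_add[symmetric])
  also have "\<dots> = \<epsilon>^b * \<epsilon> powr (M - b)" using e by (simp add: powr_realpow)
  also have "\<dots> \<le> \<epsilon>^b * ((C/2)^b/2)" using l1 e by (intro mult_left_mono) auto
  finally have l2a: "\<epsilon> powr M \<le> \<epsilon>^b * ((C/2)^b/2)" .
  have pm: "(C/2*\<epsilon>)^b = (C/2)^b * \<epsilon>^b" by (rule power_mult_distrib)
  have eqx: "\<epsilon>^b * ((C/2)^b/2) = (C/2)^b * \<epsilon>^b / 2" by simp
  have l2: "\<epsilon> powr M \<le> (C/2*\<epsilon>)^b / 2" using l2a pm eqx by linarith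
  have l3: "y^b \<ge> (C/2*\<epsilon>)^b"
    by (rule power_mono[OF y]) (use C e in auto)
  have l4: "x^2 > (C/2*\<epsilon>)^b / 2" using P l2 l3 by linarith
  have "(C/2*\<epsilon>)^b = 2^b * (C/4*\<epsilon>)^b"
    by (simp add: power_mult_distrib[symmetric])
  moreover have "(2::real)^1 \<le> 2^b"
    by (rule power_increasing) (use b in auto)
  moreover have "(C/4*\<epsilon>)^b > 0" using C e by simp
  ultimately have "(C/4*\<epsilon>)^b * 1 \<le> (C/4*\<epsilon>)^b * (2^b/2)"
    by (intro mult_left_mono) auto
  moreover have "(C/4*\<epsilon>)^b * (2^b/2) = (C/2*\<epsilon>)^b / 2"
    using \<open>(C/2*\<epsilon>)^b = 2^b * (C/4*\<epsilon>)^b\<close> by simp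
  ultimately have "(C/2*\<epsilon>)^b / 2 \<ge> (C/4*\<epsilon>)^b" by simp
  then show ?thesis using l4 by linarith
qed

theorem mainTheorem11:
  fixes b :: nat and C eps_star M :: real and sbar :: "real \<Rightarrow> real \<Rightarrow> real"
  assumes "odd b" and "b \<ge> 5" and "C > 0"
    and "eps_star > 0"
    and "\<forall>\<epsilon>. 0 < \<epsilon> \<and> \<epsilon> < eps_star \<longrightarrow> unique_min_gamma b \<epsilon>"
    and "M > 3 * qexp b - 1"
    and "\<forall>\<epsilon>. 0 < \<epsilon> \<and> \<epsilon> < eps_star \<longrightarrow> sbar \<epsilon> M > 0 \<and>
           (\<forall>s \<omega> T. 0 < s \<and> s < sbar \<epsilon> M \<and> Copt b s \<epsilon> \<omega> T \<longrightarrow>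
               beta b \<omega> T < \<epsilon> powr M \<and> beta_til b \<omega> T < \<epsilon> powr M)"
  shows "(\<exists>\<epsilon>0>0. \<forall>\<epsilon> s \<omega> T t0. 0 < \<epsilon> \<and> \<epsilon> < \<epsilon>0 \<and> 0 < s \<and> Copt b s \<epsilon> \<omega> T \<and>
             t0 \<in> {0..T} \<and> snd (\<omega> t0) \<ge> C * \<epsilon> \<longrightarrow>
             (\<forall>t\<in>{t0..T}. snd (\<omega> t) \<ge> C / 2 * \<epsilon>))
       \<and> (\<exists>\<epsilon>0>0. \<forall>\<epsilon> s \<omega> T t0. (\<epsilon>, s) \<in> Iset eps_star sbar M \<epsilon>0 \<and> Copt b s \<epsilon> \<omega> T \<and>
             t0 \<in> {0..T} \<and> snd (\<omega> t0) \<ge> C * \<epsilon> \<longrightarrow>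
             (\<forall>t\<in>{t0..T}. fst (\<omega> t) \<ge> (C / 4 * \<epsilon>) powr qexp b))"
proof -
  have b5: "b \<ge> 5" and C: "C > 0" using assms by auto
  have b1: "b \<ge> 1" using b5 by simp
  have Mb: "M > b" using assms(6) b5 by (simp add: qexp_def)
  have H7: "\<And>\<epsilon> s \<omega> T. 0 < \<epsilon> \<Longrightarrow> \<epsilon> < eps_star \<Longrightarrow> 0 < s \<Longrightarrow> s < sbar \<epsilon> M \<Longrightarrow> Copt b s \<epsilon> \<omega> T \<Longrightarrow>
      beta b \<omega> T < \<epsilon> powr M"
    using assms(7) by blast
  define e0 where "e0 = min 1 C"
  define e1 where "e1 = ((C/2)^b/2) powr (1/(M - b))"
  have e0pos: "e0 > 0" using C by (simp add: e0_def)
  have e1pos: "e1 > 0" using C by (simp add: e1_def)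
  show ?thesis
  proof (intro conjI)
    show "\<exists>\<epsilon>0>0. \<forall>\<epsilon> s \<omega> T t0. 0 < \<epsilon> \<and> \<epsilon> < \<epsilon>0 \<and> 0 < s \<and> Copt b s \<epsilon> \<omega> T \<and>
             t0 \<in> {0..T} \<and> snd (\<omega> t0) \<ge> C * \<epsilon> \<longrightarrow>
             (\<forall>t\<in>{t0..T}. snd (\<omega> t) \<ge> C / 2 * \<epsilon>)"
      using partI[OF b5 C] e0pos unfolding e0_def by blast
    show "\<exists>\<epsilon>0>0. \<forall>\<epsilon> s \<omega> T t0. (\<epsilon>, s) \<in> Iset eps_star sbar M \<epsilon>0 \<and> Copt b s \<epsilon> \<omega> T \<and>
             t0 \<in> {0..T} \<and> snd (\<omega> t0) \<ge> C * \<epsilon> \<longrightarrow>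
             (\<forall>t\<in>{t0..T}. fst (\<omega> t) \<ge> (C / 4 * \<epsilon>) powr qexp b)"
    proof (rule exI[of _ "min e0 e1"], intro conjI allI impI ballI)
      show "min e0 e1 > 0" using e0pos e1pos by simp
      fix \<epsilon> s \<omega> T t0 t
      assume A: "(\<epsilon>, s) \<in> Iset eps_star sbar M (min e0 e1) \<and> Copt b s \<epsilon> \<omega> T \<and>
             t0 \<in> {0..T} \<and> snd (\<omega> t0) \<ge> C * \<epsilon>"
        and t: "t \<in> {t0..T}"
      have e: "0 < \<epsilon>" "\<epsilon> < eps_star" "\<epsilon> < e0" "\<epsilon> < e1" and s: "0 < s" "s < sbar \<epsilon> M"
        using A unfolding Iset_def by auto
      have Co: "Copt b s \<epsilon> \<omega> T" and t0: "t0 \<in> {0..T}" "snd (\<omega> t0) \<ge> C * \<epsilon>" using A by auto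
      note F = Copt_facts[OF b1 s(1) e(1) Co]
      have beta: "beta b \<omega> T < \<epsilon> powr M" by (rule H7[OF e(1,2) s Co])
      have contP: "continuous_on {0..T} (\<lambda>t. \<bar>Pf b (fst (\<omega> t)) (snd (\<omega> t))\<bar>)"
        unfolding Pf_def by (intro continuous_intros F(5))
      have bdd: "bdd_above ((\<lambda>t. \<bar>Pf b (fst (\<omega> t)) (snd (\<omega> t))\<bar>) ` {0..T})"
        by (rule bounded_imp_bdd_above, rule compact_imp_bounded, rule compact_continuous_image[OF contP]) simp
      have Pb: "\<bar>Pf b (fst (\<omega> x)) (snd (\<omega> x))\<bar> < \<epsilon> powr M" if "x \<in> {0..T}" for x
      proof -
        have "\<bar>Pf b (fst (\<omega> x)) (snd (\<omega> x))\<bar> \<le> beta b \<omega> T"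
          unfolding beta_def by (rule cSup_upper[OF _ bdd]) (use that in auto)
        then show ?thesis using beta by linarith
      qed
      have sq: "(fst (\<omega> x))^2 \<ge> (C/4*\<epsilon>)^b" if "x \<in> {t0..T}" for x
      proof (rule partII_num[OF b5 C Mb e(1)])
        show "\<epsilon> < ((C/2)^b/2) powr (1/(M - b))" using e(4) by (simp add: e1_def)
        show "snd (\<omega> x) \<ge> C / 2 * \<epsilon>"
          by (rule partI[OF b5 C e(1) _ s(1) Co t0 that]) (use e(3) in \<open>simp add: e0_def\<close>)
        show "\<bar>(fst (\<omega> x))^2 - (snd (\<omega> x))^b\<bar> < \<epsilon> powr M"
          using Pb[of x] that t0 by (simp add: Pf_def)
      qed
      have pos4: "(C/4*\<epsilon>)^b > 0" using C e by simp
      have nz: "fst (\<omega> x) \<noteq> 0" if "x \<in> {t0..T}" for x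
        using sq[OF that] pos4 by auto
      have fpos: "fst (\<omega> t) > 0"
      proof (rule ccontr)
        assume "\<not> fst (\<omega> t) > 0"
        then have neg: "fst (\<omega> t) \<le> 0" by simp
        have fT: "fst (\<omega> T) > 0" using F(3) e by simp
        have "continuous_on {t..T} (\<lambda>x. fst (\<omega> x))"
          by (intro continuous_intros continuous_on_subset[OF F(5)]) (use t t0 in auto)
        then obtain x where x: "t \<le> x" "x \<le> T" "fst (\<omega> x) = 0"
          using IVT'[of "\<lambda>x. fst (\<omega> x)" t 0 T] neg fT t by auto
        then show False using nz[of x] t by auto
      qed
      have "((C/4*\<epsilon>) powr qexp b)^2 = (C/4*\<epsilon>)^b"
      proof -
        have "((C/4*\<epsilon>) powr qexp b)^2 = (C/4*\<epsilon>) powr (of_nat 2 * qexp b)"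
          by (rule powr_power) (use C e in auto)
        also have "of_nat 2 * qexp b = real b" by (simp add: qexp_def)
        also have "(C/4*\<epsilon>) powr real b = (C/4*\<epsilon>)^b" by (rule powr_realpow) (use C e in auto)
        finally show ?thesis .
      qed
      then have "((C/4*\<epsilon>) powr qexp b)^2 \<le> (fst (\<omega> t))^2" using sq[OF t] by simp
      then show "fst (\<omega> t) \<ge> (C / 4 * \<epsilon>) powr qexp b"
        by (rule power2_le_imp_le) (use fpos in simp)
    qed
  qed
qed

end
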